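(* Let $\mathcal T$ be an oscillating tableau of length $r$ and let $(\iota,T)$ be its image under Sundaram's first bijection. Then $\mathrm{Des}(\mathcal T)=\mathrm{Des}(\iota,T)$.
   Context: An oscillating tableau of length $r$ is a sequence of partitions $(\emptyset=\mu^0,\dots,\mu^r)$ with consecutive Ferrers diagrams (English notation) differing by exactly one box; step $k$ is an expansion or contraction according as the box $b_k$ is added or removed. $\mathrm{Des}(\mathcal T)$ is the set of $k\in\{1,\dots,r-1\}$ such that (i) step $k$ is an expansion and step $k+1$ a contraction, or (ii) both are expansions and $b_k$ is in a row strictly above $b_{k+1}$, or (iii) both are contractions and $b_k$ is in a row strictly below $b_{k+1}$. A partial Young tableau is a filling of a Ferrers shape by distinct positive integers increasing along rows and columns. Column deletion of the entry $y$ in a corner box in column $j$: remove it, then for columns $j-1,\dots,1$ in turn replace the largest entry smaller than the current $y$ by $y$ and let $y$ be the replaced entry; the final $y$ is the output $x$. Sundaram's first bijection: set $\iota_0=T_0=\emptyset$; for $k=1,\dots,r$, if step $k$ is an expansion then $\iota_k=\iota_{k-1}$ and $T_k$ is $T_{k-1}$ with $k$ placed in $b_k$; if a contraction, column-delete the entry of $b_k$ from $T_{k-1}$ getting $x$ and $T_k$, and let $\iota_k=\iota_{k-1}$ with the transposition $(x,k)$ adjoined. The output is $(\iota,T)=(\iota_r,T_r)$, where $\iota$ is a fixed-point-free involution on a set $A\subseteq\{1,\dots,r\}$ and $T$ has entry set $\{1,\dots,r\}\setminus A$. Descents: for a bijection $\iota:A\to A$, $\mathrm{Des}(\iota)=\{k: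 k,k+1\in A,\ \iota(k)>\iota(k+1)\}$; for a partial tableau $T$ with entry set $B$, $\mathrm{Des}(T)=\{k:k,k+1\in B,\ k+1 \text{ in a row strictly below } k\}$; for sets $X,Y$, $\mathrm{Des}(X/Y)=\{k: k\in X,\ k+1\in Y\}$, and $\mathrm{Des}(T/\iota)$ means $\mathrm{Des}(B/A)$. Finally $\mathrm{Des}(\iota,T)=\mathrm{Des}(\iota)\cup\mathrm{Des}(T)\cup\mathrm{Des}(T/\iota)$ (a disjoint union). *)

theory Defs
  imports Main
begin

text \<open>Cells are pairs (row, column), 0-indexed, English notation: row 0 is the top row,
  so "row i strictly above row i'" means i < i'.  A partition is represented by its
  Ferrers diagram, a finite down-closed set of cells.\<close>

type_synonym cell = "nat \<times> nat"
type_synonym diagram = "cell set"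
type_synonym tab = "cell \<Rightarrow> nat option"

definition ferrers :: "diagram \<Rightarrow> bool" where
  "ferrers D \<longleftrightarrow> finite D \<and>
     (\<forall>i j i' j'. (i, j) \<in> D \<and> i' \<le> i \<and> j' \<le> j \<longrightarrow> (i', j') \<in> D)"

definition osc_tableau :: "nat \<Rightarrow> diagram list \<Rightarrow> bool" where
  "osc_tableau r mus \<longleftrightarrow> length mus = Suc r \<and> mus ! 0 = {} \<and>
     (\<forall>k \<le> r. ferrers (mus ! k)) \<and>
     (\<forall>k \<in> {1..r}. \<exists>b. (mus ! (k - 1) - mus ! k) \<union> (mus ! k - mus ! (k - 1)) = {b})"

definition box :: "diagram list \<Rightarrow> nat \<Rightarrow> cell" where
  "box mus k = (THE b. b \<in> (mus ! (k - 1) - mus ! k) \<union> (mus ! k - mus ! (k - 1)))"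

definition expansion :: "diagram list \<Rightarrow> nat \<Rightarrow> bool" where
  "expansion mus k \<longleftrightarrow> box mus k \<in> mus ! k"

definition contraction :: "diagram list \<Rightarrow> nat \<Rightarrow> bool" where
  "contraction mus k \<longleftrightarrow> box mus k \<in> mus ! (k - 1)"

definition Des_osc :: "nat \<Rightarrow> diagram list \<Rightarrow> nat set" where
  "Des_osc r mus = {k \<in> {1..r - 1}.
      (expansion mus k \<and> contraction mus (k + 1))
    \<or> (expansion mus k \<and> expansion mus (k + 1) \<and> fst (box mus k) < fst (box mus (k + 1)))
    \<or> (contraction mus k \<and> contraction mus (k + 1) \<and> fst (box mus k) > fst (box mus (k + 1)))}"

definition partial_young :: "tab \<Rightarrow> bool" where
  "partial_young T \<longleftrightarrow> ferrers (dom T) \<and> inj_on T (dom T) \<and> 0 \<notin> ran T \<and>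
     (\<forall>i j v w. T (i, j) = Some v \<and> T (i, Suc j) = Some w \<longrightarrow> v < w) \<and>
     (\<forall>i j v w. T (i, j) = Some v \<and> T (Suc i, j) = Some w \<longrightarrow> v < w)"

text \<open>bump T c y processes columns c-1, ..., 0 (0-indexed) in turn: in the current
  column, replace the largest entry smaller than y by y, and continue with the
  replaced entry.\<close>
fun bump :: "tab \<Rightarrow> nat \<Rightarrow> nat \<Rightarrow> tab \<times> nat" where
  "bump T 0 y = (T, y)"
| "bump T (Suc c) y =
     (let v = Max {v. \<exists>i. T (i, c) = Some v \<and> v < y};
          i = (THE i. T (i, c) = Some v)
      in bump (T((i, c) := Some y)) c v)"

definition col_delete :: "tab \<Rightarrow> cell \<Rightarrow> tab \<times> nat" where
  "col_delete T b = bump (T(b := None)) (snd b) (the (T b))"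

text \<open>Sundaram's first bijection, state after step k: (iota_k, T_k), where the
  involution iota is a partial map with domain A.\<close>
fun sundaram :: "diagram list \<Rightarrow> nat \<Rightarrow> (nat \<rightharpoonup> nat) \<times> tab" where
  "sundaram mus 0 = (Map.empty, Map.empty)"
| "sundaram mus (Suc k) =
     (let (\<iota>, T) = sundaram mus k; b = box mus (Suc k) in
      if expansion mus (Suc k) then (\<iota>, T(b \<mapsto> Suc k))
      else (let (T', x) = col_delete T b in (\<iota>(x \<mapsto> Suc k, Suc k \<mapsto> x), T')))"

definition Des_inv :: "(nat \<rightharpoonup> nat) \<Rightarrow> nat set" where
  "Des_inv \<iota> = {k. k \<in> dom \<iota> \<and> Suc k \<in> dom \<iota> \<and> the (\<iota> k) > the (\<iota> (Suc k))}"

definition row_of :: "tab \<Rightarrow> nat \<Rightarrow> nat" where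
  "row_of T v = (THE i. \<exists>j. T (i, j) = Some v)"

definition Des_tab :: "tab \<Rightarrow> nat set" where
  "Des_tab T = {k. k \<in> ran T \<and> Suc k \<in> ran T \<and> row_of T (Suc k) > row_of T k}"

definition Des_sets :: "nat set \<Rightarrow> nat set \<Rightarrow> nat set" where
  "Des_sets X Y = {k. k \<in> X \<and> Suc k \<in> Y}"

definition Des_pair :: "(nat \<rightharpoonup> nat) \<times> tab \<Rightarrow> nat set" where
  "Des_pair p = (case p of (\<iota>, T) \<Rightarrow> Des_inv \<iota> \<union> Des_tab T \<union> Des_sets (ran T) (dom \<iota>))"

end

theory Submission
  imports Defs
begin


definition young :: "tab \<Rightarrow> bool" where
 "young T \<longleftrightarrow> inj_on T (dom T) \<and> (\<forall>i j i' j' v w. T (i,j) = Some v \<longrightarrow> T (i',j') = Some w \<longrightarrow> i \<le> i' \<longrightarrow> j \<le> j' \<longrightarrow> (i,j) \<noteq> (i',j') \<longrightarrow> v < w)"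

lemma youngD: "young T \<Longrightarrow> T (i,j) = Some v \<Longrightarrow> T (i',j') = Some w \<Longrightarrow> i \<le> i' \<Longrightarrow> j \<le> j' \<Longrightarrow> (i,j) \<noteq> (i',j') \<Longrightarrow> v < w"
  unfolding young_def by blast

lemma young_inj: "young T \<Longrightarrow> T a = Some v \<Longrightarrow> T b = Some v \<Longrightarrow> a = b"
  unfolding young_def inj_on_def by (metis domI)

lemma ferrersD: "ferrers D \<Longrightarrow> (i,j) \<in> D \<Longrightarrow> i' \<le> i \<Longrightarrow> j' \<le> j \<Longrightarrow> (i',j') \<in> D"
  unfolding ferrers_def by blast

lemma ferrers_fin: "ferrers D \<Longrightarrow> finite D"
  unfolding ferrers_def by blast

lemma row_of_eq: "young T \<Longrightarrow> T (i,j) = Some w \<Longrightarrow> row_of T w = i"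
  unfolding row_of_def
  apply (rule the_equality)
   apply blast
  using young_inj by blast

lemma row_of_same: "(\<And>z. T z = Some w \<longleftrightarrow> T' z = Some w) \<Longrightarrow> row_of T' w = row_of T w"
  unfolding row_of_def by simp

definition Inv :: "tab \<Rightarrow> nat \<Rightarrow> nat \<Rightarrow> nat \<Rightarrow> bool" where
 "Inv T c p y \<longleftrightarrow> ferrers (dom T) \<and> ferrers (dom (T((p,c) \<mapsto> y))) \<and> young T \<and> young (T((p,c) \<mapsto> y))
    \<and> y \<notin> ran T \<and> (\<forall>B. T (p,c) = Some B \<longrightarrow> y < B)"

lemma K1: assumes "Inv T c p y" "T (r,s) = Some a" "p \<le> r" "c \<le> s" shows "y < a"
proof (cases "(r,s) = (p,c)")
  case True then show ?thesis using assms unfolding Inv_def by auto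
next
  case False
  have "young (T((p,c) \<mapsto> y))" using assms unfolding Inv_def by blast
  from youngD[OF this, of p c y r s a] False assms(2-4) show ?thesis by auto
qed

lemma K2: assumes "Inv T c p y" "T (r,s) = Some a" "p < r" "c \<le> s" shows "\<exists>B. T (p,c) = Some B \<and> y < B \<and> B < a"
proof -
  have f: "ferrers (dom T)" and yg: "young T" using assms unfolding Inv_def by blast+
  have "(p,c) \<in> dom T" using ferrersD[OF f, of r s p c] assms by auto
  then obtain B where B: "T (p,c) = Some B" by auto
  have "y < B" using B assms unfolding Inv_def by blast
  moreover have "B < a" using youngD[OF yg B assms(2)] assms by auto
  ultimately show ?thesis using B by blast
qed

lemma young_restrict: "young T \<Longrightarrow> young (T(b := None))"
  unfolding young_def inj_on_def by (auto split: if_splits)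

lemma step:
  assumes I: "Inv T (Suc c) p y"
  defines "S \<equiv> {v. \<exists>i. T (i,c) = Some v \<and> v < y}"
  obtains q v where "S \<noteq> {}" "finite S" "Max S = v" "T (q,c) = Some v"
    "(THE i. T (i,c) = Some v) = q" "p \<le> q" "v < y" "Inv (T((q,c) \<mapsto> y)) c q v"
proof -
  let ?V = "T((p,Suc c) \<mapsto> y)"
  have f: "ferrers (dom T)" and fV: "ferrers (dom ?V)" and yT: "young T" and yV: "young ?V"
    and ny: "y \<notin> ran T" and B6: "\<And>B. T (p,Suc c) = Some B \<Longrightarrow> y < B"
    using I unfolding Inv_def by blast+
  have "(p, c) \<in> dom ?V" using ferrersD[OF fV, of p "Suc c" p c] by auto
  then obtain v0 where v0: "T (p,c) = Some v0" by auto
  have "v0 < y" using youngD[OF yV, of p c v0 p "Suc c" y] v0 by auto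
  hence v0S: "v0 \<in> S" using v0 unfolding S_def by blast
  have "S \<subseteq> ran T" unfolding S_def ran_def by blast
  moreover have "finite (ran T)" using f ferrers_fin finite_ran by blast
  ultimately have finS: "finite S" using finite_subset by blast
  have ne: "S \<noteq> {}" using v0S by blast
  define v where "v = Max S"
  have "v \<in> S" using Max_in[OF finS ne] v_def by simp
  then obtain q where q: "T (q,c) = Some v" and vy: "v < y" unfolding S_def by blast
  have maxS: "\<And>w. w \<in> S \<Longrightarrow> w \<le> v" using Max_ge[OF finS] v_def by blast
  have th: "(THE i. T (i,c) = Some v) = q"
    apply (rule the_equality) using q young_inj[OF yT] q by blast+
  have pq: "p \<le> q"
  proof (rule ccontr)
    assume "\<not> p \<le> q"
    hence "v < v0" using youngD[OF yT q v0] by auto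
    with maxS[OF v0S] show False by simp
  qed
  let ?T' = "T((q,c) \<mapsto> y)"
  have domT': "dom ?T' = dom T" using q by auto
  have V': "?T'((q,c) \<mapsto> v) = T" using q by (auto simp: fun_eq_iff)
  have nv: "v \<notin> ran ?T'"
  proof
    assume "v \<in> ran ?T'"
    then obtain z where z: "?T' z = Some v" unfolding ran_def by blast
    show False
    proof (cases "z = (q,c)")
      case True then show False using z vy by simp
    next
      case False then have "T z = Some v" using z by simp
      then show False using young_inj[OF yT _ q] False by blast
    qed
  qed
  have yT': "young ?T'"
    unfolding young_def
  proof (intro conjI allI impI)
    show "inj_on ?T' (dom ?T')"
      unfolding inj_on_def
    proof (intro ballI impI)
      fix a b assume a: "a \<in> dom ?T'" and b: "b \<in> dom ?T'" and e: "?T' a = ?T' b"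
      show "a = b"
      proof (cases "a = (q,c)"; cases "b = (q,c)")
        assume "a = (q,c)" "b \<noteq> (q,c)"
        then have "T b = Some y" using e by simp
        then show ?thesis using ny unfolding ran_def by blast
      next
        assume "a \<noteq> (q,c)" "b = (q,c)"
        then have "T a = Some y" using e by simp
        then show ?thesis using ny unfolding ran_def by blast
      next
        assume "a \<noteq> (q,c)" "b \<noteq> (q,c)"
        then obtain w where "T a = Some w" "T b = Some w" using e a by (auto simp: dom_def)
        then show ?thesis using young_inj[OF yT] by blast
      qed simp
    qed
  next
    fix i j i' j' v1 w1
    assume h1: "?T' (i,j) = Some v1" and h2: "?T' (i',j') = Some w1" and le: "i \<le> i'" "j \<le> j'"
      and ne: "(i,j) \<noteq> (i',j')"
    show "v1 < w1"
    proof (cases "(i,j) = (q,c)")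
      case True
      then have v1: "v1 = y" using h1 by simp
      have Tw: "T (i',j') = Some w1" using h2 ne True by auto
      show ?thesis
      proof (cases "j' = c")
        case True
        then have "v < w1" using youngD[OF yT q Tw] `(i,j) = (q,c)` le ne by auto
        moreover have "w1 \<noteq> y" using Tw ny unfolding ran_def by blast
        moreover have "\<not> w1 < y"
        proof
          assume "w1 < y" hence "w1 \<in> S" using Tw True unfolding S_def by blast
          with maxS have "w1 \<le> v" by blast
          with `v < w1` show False by simp
        qed
        ultimately show ?thesis using v1 by simp
      next
        case False
        then have "Suc c \<le> j'" using le `(i,j) = (q,c)` by auto
        then show ?thesis using K1[OF I Tw] pq le `(i,j) = (q,c)` v1 by auto
      qed
    next
      case False
      then have Tv: "T (i,j) = Some v1" using h1 by (auto split: if_splits)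
      show ?thesis
      proof (cases "(i',j') = (q,c)")
        case True
        then have "w1 = y" using h2 by simp
        moreover have "v1 < v" using youngD[OF yT Tv q] le ne True by auto
        ultimately show ?thesis using vy by simp
      next
        case False
        then show ?thesis using youngD[OF yT Tv] h2 le ne by auto
      qed
    qed
  qed
  have "Inv ?T' c q v"
    unfolding Inv_def using domT' V' f yT yT' nv vy by auto
  then show ?thesis using that ne finS v_def q th pq vy by blast
qed

definition R :: "tab \<Rightarrow> nat \<Rightarrow> nat \<Rightarrow> nat \<Rightarrow> nat" where
  "R T p y w = (if w = y then p else row_of T w)"

lemma R_step:
  assumes I: "Inv T (Suc c) p y" and q: "T (q,c) = Some v" and vy: "v < y" and I': "Inv (T((q,c) \<mapsto> y)) c q v"
  shows "R (T((q,c) \<mapsto> y)) q v w = (if w = y then q else R T p y w)"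
proof -
  have yT: "young T" and yT': "young (T((q,c) \<mapsto> y))" using I I' unfolding Inv_def by blast+
  show ?thesis
  proof (cases "w = y")
    case True
    then show ?thesis unfolding R_def using vy row_of_eq[OF yT', of q c y] by auto
  next
    case False
    show ?thesis
    proof (cases "w = v")
      case True
      then show ?thesis unfolding R_def using False row_of_eq[OF yT q] by auto
    next
      case False2: False
      have "row_of (T((q,c) \<mapsto> y)) w = row_of T w"
        apply (rule row_of_same) using False False2 q by auto
      then show ?thesis unfolding R_def using False False2 by auto
    qed
  qed
qed

lemma status_step:
  assumes I: "Inv T (Suc c) p y" and q: "T (q,c) = Some v" and vy: "v < y" and pq: "p \<le> q"
    and I': "Inv (T((q,c) \<mapsto> y)) c q v"
    and a: "a \<in> ran T \<union> {y}" and a1: "Suc a \<in> ran T \<union> {y}"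
  shows "(R (T((q,c) \<mapsto> y)) q v a < R (T((q,c) \<mapsto> y)) q v (Suc a)) \<longleftrightarrow> (R T p y a < R T p y (Suc a))"
proof -
  have yT: "young T" using I unfolding Inv_def by blast
  note RS = R_step[OF I q vy I']
  show ?thesis
  proof (cases "y = Suc a")
    case True
    then have "a \<in> ran T" using a by auto
    then obtain r s where rs: "T (r,s) = Some a" unfolding ran_def by auto
    have Ra: "R T p y a = r" unfolding R_def using True row_of_eq[OF yT rs] by auto
    have "\<not> (p \<le> r \<and> r < q)"
    proof
      assume h: "p \<le> r \<and> r < q"
      show False
      proof (cases "Suc c \<le> s")
        case True
        then show False using K1[OF I rs] h `y = Suc a` by auto
      next
        case False
        have "(r,s) \<noteq> (q,c)" using h by auto
        then have "a < v" using youngD[OF yT rs q] h False by auto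
        then show False using vy `y = Suc a` by simp
      qed
    qed
    then show ?thesis using RS True Ra pq unfolding R_def by auto
  next
    case False
    show ?thesis
    proof (cases "y = a")
      case True
      then have "Suc a \<in> ran T" using a1 by auto
      then obtain r s where rs: "T (r,s) = Some (Suc a)" unfolding ran_def by auto
      have Ra: "R T p y (Suc a) = r" unfolding R_def using True row_of_eq[OF yT rs] by auto
      have "\<not> (p < r \<and> r \<le> q)"
      proof
        assume h: "p < r \<and> r \<le> q"
        show False
        proof (cases "Suc c \<le> s")
          case True
          then show False using K2[OF I rs] h `y = a` by auto
        next
          case False
          show False
          proof (cases "(r,s) = (q,c)")
            case True then show False using rs q vy `y = a` by simp
          next
            case False2: False
            then have "Suc a < v" using youngD[OF yT rs q] h False by auto
            then show False using vy `y = a` by simp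
          qed
        qed
      qed
      then show ?thesis using RS True Ra pq unfolding R_def by auto
    next
      case False2: False
      then show ?thesis using RS False by simp
    qed
  qed
qed

lemma status_final1:
  assumes I: "Inv T 0 p x" and "x = Suc a" and "a \<in> ran T" shows "row_of T a < p"
proof -
  have yT: "young T" using I unfolding Inv_def by blast
  obtain r s where rs: "T (r,s) = Some a" using assms(3) unfolding ran_def by auto
  have "\<not> p \<le> r" using K1[OF I rs] assms(2) by auto
  then show ?thesis using row_of_eq[OF yT rs] by simp
qed

lemma status_final2:
  assumes I: "Inv T 0 p x" and "x = a" and "Suc a \<in> ran T" shows "\<not> p < row_of T (Suc a)"
proof -
  have yT: "young T" using I unfolding Inv_def by blast
  obtain r s where rs: "T (r,s) = Some (Suc a)" using assms(3) unfolding ran_def by auto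
  have "\<not> p < r" using K2[OF I rs] assms(2) by auto
  then show ?thesis using row_of_eq[OF yT rs] by simp
qed

lemma bump_main:
  "Inv T c p y \<Longrightarrow> bump T c y = (T', x) \<Longrightarrow> \<exists>p'. Inv T' 0 p' x \<and> dom T' = dom T \<and> ran T' \<union> {x} = ran T \<union> {y}
     \<and> (\<forall>a. a \<in> ran T \<union> {y} \<longrightarrow> Suc a \<in> ran T \<union> {y} \<longrightarrow>
          (R T' p' x a < R T' p' x (Suc a) \<longleftrightarrow> R T p y a < R T p y (Suc a)))"
proof (induction c arbitrary: T p y)
  case 0
  then show ?case by auto
next
  case (Suc c)
  obtain q v where ne: "{v. \<exists>i. T (i,c) = Some v \<and> v < y} \<noteq> {}" and M: "Max {v. \<exists>i. T (i,c) = Some v \<and> v < y} = v"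
    and q: "T (q,c) = Some v" and th: "(THE i. T (i,c) = Some v) = q" and pq: "p \<le> q" and vy: "v < y"
    and I': "Inv (T((q,c) \<mapsto> y)) c q v"
    using step[OF Suc.prems(1)] by blast
  have yT: "young T" and ny: "y \<notin> ran T" using Suc.prems(1) unfolding Inv_def by blast+
  have "bump T (Suc c) y = bump (T((q,c) \<mapsto> y)) c v" using M th by (simp add: Let_def)
  then have b: "bump (T((q,c) \<mapsto> y)) c v = (T', x)" using Suc.prems(2) by simp
  obtain p' where IH: "Inv T' 0 p' x" "dom T' = dom (T((q,c) \<mapsto> y))"
     "ran T' \<union> {x} = ran (T((q,c) \<mapsto> y)) \<union> {v}"
     "\<forall>a. a \<in> ran (T((q,c) \<mapsto> y)) \<union> {v} \<longrightarrow> Suc a \<in> ran (T((q,c) \<mapsto> y)) \<union> {v} \<longrightarrow>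
          (R T' p' x a < R T' p' x (Suc a) \<longleftrightarrow> R (T((q,c) \<mapsto> y)) q v a < R (T((q,c) \<mapsto> y)) q v (Suc a))"
    using Suc.IH[OF I' b] by blast
  have rr: "ran (T((q,c) \<mapsto> y)) \<union> {v} = ran T \<union> {y}"
  proof
    show "ran (T((q,c) \<mapsto> y)) \<union> {v} \<subseteq> ran T \<union> {y}"
      using q by (auto simp: ran_def split: if_splits)
    show "ran T \<union> {y} \<subseteq> ran (T((q,c) \<mapsto> y)) \<union> {v}"
    proof
      fix w assume "w \<in> ran T \<union> {y}"
      then show "w \<in> ran (T((q,c) \<mapsto> y)) \<union> {v}"
      proof
        assume "w \<in> ran T"
        then obtain z where z: "T z = Some w" unfolding ran_def by auto
        show ?thesis
        proof (cases "z = (q,c)")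
          case True then show ?thesis using z q by auto
        next
          case False then have "(T((q,c) \<mapsto> y)) z = Some w" using z by simp
          then show ?thesis unfolding ran_def by blast
        qed
      next
        assume "w \<in> {y}"
        then have "(T((q,c) \<mapsto> y)) (q,c) = Some w" by simp
        then show ?thesis unfolding ran_def by blast
      qed
    qed
  qed
  have "dom T' = dom T" using IH(2) q by auto
  moreover have "ran T' \<union> {x} = ran T \<union> {y}" using IH(3) rr by simp
  moreover have "\<forall>a. a \<in> ran T \<union> {y} \<longrightarrow> Suc a \<in> ran T \<union> {y} \<longrightarrow>
          (R T' p' x a < R T' p' x (Suc a) \<longleftrightarrow> R T p y a < R T p y (Suc a))"
  proof (intro allI impI)
    fix a assume a: "a \<in> ran T \<union> {y}" and a1: "Suc a \<in> ran T \<union> {y}"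
    then have "a \<in> ran (T((q,c) \<mapsto> y)) \<union> {v}" "Suc a \<in> ran (T((q,c) \<mapsto> y)) \<union> {v}" using rr by auto
    then show "(R T' p' x a < R T' p' x (Suc a) \<longleftrightarrow> R T p y a < R T p y (Suc a))"
      using IH(4) status_step[OF Suc.prems(1) q vy pq I' a a1] by blast
  qed
  ultimately show ?case using IH(1) by blast
qed

lemma init_Inv:
  assumes yT: "young T" and f: "ferrers (dom T)" and b: "T b = Some y" and fb: "ferrers (dom T - {b})"
  shows "Inv (T(b := None)) (snd b) (fst b) y"
proof -
  have e: "(T(b := None))((fst b, snd b) \<mapsto> y) = T" using b by (auto simp: fun_eq_iff)
  have "dom (T(b := None)) = dom T - {b}" by auto
  moreover have "y \<notin> ran (T(b := None))"
  proof
    assume "y \<in> ran (T(b := None))"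
    then obtain z where "(T(b := None)) z = Some y" unfolding ran_def by blast
    then show False using young_inj[OF yT _ b] by (auto split: if_splits)
  qed
  ultimately show ?thesis unfolding Inv_def using e f fb yT young_restrict[OF yT] by auto
qed

lemma col_delete_main:
  assumes yT: "young T" and f: "ferrers (dom T)" and b: "b \<in> dom T" and fb: "ferrers (dom T - {b})"
    and cd: "col_delete T b = (T', x)"
  shows "young T'" "dom T' = dom T - {b}" "x \<in> ran T" "ran T' = ran T - {x}"
    "\<And>a. a \<in> ran T \<Longrightarrow> Suc a \<in> ran T \<Longrightarrow> x \<noteq> a \<Longrightarrow> x \<noteq> Suc a \<Longrightarrow>
        (row_of T' a < row_of T' (Suc a) \<longleftrightarrow> row_of T a < row_of T (Suc a))"
    "\<And>a. a \<in> ran T \<Longrightarrow> Suc a \<in> ran T \<Longrightarrow> x = Suc a \<Longrightarrow> row_of T a < row_of T (Suc a)"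
    "\<And>a. a \<in> ran T \<Longrightarrow> Suc a \<in> ran T \<Longrightarrow> x = a \<Longrightarrow> \<not> row_of T a < row_of T (Suc a)"
proof -
  obtain y where y: "T b = Some y" using b by auto
  note I = init_Inv[OF yT f y fb]
  have bb: "bump (T(b := None)) (snd b) y = (T', x)" using cd y unfolding col_delete_def by simp
  obtain p' where M: "Inv T' 0 p' x" "dom T' = dom (T(b := None))" "ran T' \<union> {x} = ran (T(b := None)) \<union> {y}"
     "\<forall>a. a \<in> ran (T(b := None)) \<union> {y} \<longrightarrow> Suc a \<in> ran (T(b := None)) \<union> {y} \<longrightarrow>
          (R T' p' x a < R T' p' x (Suc a) \<longleftrightarrow> R (T(b := None)) (fst b) y a < R (T(b := None)) (fst b) y (Suc a))"
    using bump_main[OF I bb] by blast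
  have rT: "ran (T(b := None)) \<union> {y} = ran T"
  proof
    show "ran (T(b := None)) \<union> {y} \<subseteq> ran T" using y by (auto simp: ran_def split: if_splits; metis surj_pair)
    show "ran T \<subseteq> ran (T(b := None)) \<union> {y}"
    proof
      fix w assume "w \<in> ran T"
      then obtain z where z: "T z = Some w" unfolding ran_def by blast
      show "w \<in> ran (T(b := None)) \<union> {y}"
      proof (cases "z = b")
        case True then show ?thesis using z y by simp
      next
        case False then have "(T(b := None)) z = Some w" using z by simp
        then show ?thesis unfolding ran_def by blast
      qed
    qed
  qed
  have R0: "\<And>w. R (T(b := None)) (fst b) y w = row_of T w"
  proof -
    fix w show "R (T(b := None)) (fst b) y w = row_of T w"
    proof (cases "w = y")
      case True then show ?thesis unfolding R_def using row_of_eq[OF yT, of "fst b" "snd b" y] y by simp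
    next
      case False
      have "row_of (T(b := None)) w = row_of T w" apply (rule row_of_same) using False y by auto
      then show ?thesis unfolding R_def using False by simp
    qed
  qed
  have yT': "young T'" and nx: "x \<notin> ran T'" using M(1) unfolding Inv_def by blast+
  show "young T'" by fact
  show "dom T' = dom T - {b}" using M(2) by auto
  show "x \<in> ran T" using M(3) rT by blast
  show "ran T' = ran T - {x}" using M(3) rT nx by blast
  have st: "\<And>a. a \<in> ran T \<Longrightarrow> Suc a \<in> ran T \<Longrightarrow>
       (R T' p' x a < R T' p' x (Suc a) \<longleftrightarrow> row_of T a < row_of T (Suc a))"
  proof -
    fix a assume a: "a \<in> ran T" "Suc a \<in> ran T"
    then have "a \<in> ran (T(b := None)) \<union> {y}" "Suc a \<in> ran (T(b := None)) \<union> {y}" using rT by auto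
    then have "R T' p' x a < R T' p' x (Suc a) \<longleftrightarrow> R (T(b := None)) (fst b) y a < R (T(b := None)) (fst b) y (Suc a)"
      using M(4) by blast
    then show "(R T' p' x a < R T' p' x (Suc a) \<longleftrightarrow> row_of T a < row_of T (Suc a))" unfolding R0 .
  qed
  have ranT': "\<And>w. w \<in> ran T \<Longrightarrow> w \<noteq> x \<Longrightarrow> w \<in> ran T'" using M(3) rT by blast
  show "\<And>a. a \<in> ran T \<Longrightarrow> Suc a \<in> ran T \<Longrightarrow> x \<noteq> a \<Longrightarrow> x \<noteq> Suc a \<Longrightarrow>
        (row_of T' a < row_of T' (Suc a) \<longleftrightarrow> row_of T a < row_of T (Suc a))"
  proof -
    fix a assume a: "a \<in> ran T" "Suc a \<in> ran T" "x \<noteq> a" "x \<noteq> Suc a"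
    have "R T' p' x a = row_of T' a" "R T' p' x (Suc a) = row_of T' (Suc a)" unfolding R_def using a by auto
    then show "(row_of T' a < row_of T' (Suc a) \<longleftrightarrow> row_of T a < row_of T (Suc a))" using st[OF a(1,2)] by simp
  qed
  show "\<And>a. a \<in> ran T \<Longrightarrow> Suc a \<in> ran T \<Longrightarrow> x = Suc a \<Longrightarrow> row_of T a < row_of T (Suc a)"
  proof -
    fix a assume a: "a \<in> ran T" "Suc a \<in> ran T" "x = Suc a"
    have "row_of T' a < p'" using status_final1[OF M(1) a(3) ranT'[OF a(1)]] a by simp
    then have "R T' p' x a < R T' p' x (Suc a)" unfolding R_def using a by simp
    then show "row_of T a < row_of T (Suc a)" using st a by blast
  qed
  show "\<And>a. a \<in> ran T \<Longrightarrow> Suc a \<in> ran T \<Longrightarrow> x = a \<Longrightarrow> \<not> row_of T a < row_of T (Suc a)"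
  proof -
    fix a assume a: "a \<in> ran T" "Suc a \<in> ran T" "x = a"
    have "\<not> p' < row_of T' (Suc a)" using status_final2[OF M(1) a(3) ranT'[OF a(2)]] a by simp
    then have "\<not> R T' p' x a < R T' p' x (Suc a)" unfolding R_def using a by simp
    then show "\<not> row_of T a < row_of T (Suc a)" using st a by blast
  qed
qed

definition mx :: "tab \<Rightarrow> nat \<Rightarrow> nat \<Rightarrow> nat" where
  "mx T c y = Max {v. \<exists>i. T (i,c) = Some v \<and> v < y}"

fun wv :: "tab \<Rightarrow> nat \<Rightarrow> nat \<Rightarrow> nat \<Rightarrow> nat" where
  "wv T 0 y d = y"
| "wv T (Suc c) y d = (if d = Suc c then y else wv T c (mx T c y) d)"

definition colset :: "tab \<Rightarrow> nat \<Rightarrow> nat set" where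
  "colset T d = {v. \<exists>i. T (i,d) = Some v}"

lemma wv_top: "wv T c y c = y"
  by (cases c) auto

lemma wv_rec: "d < c \<Longrightarrow> wv T c y d = mx T d (wv T c y (Suc d))"
proof (induction c arbitrary: y)
  case 0 then show ?case by simp
next
  case (Suc c)
  show ?case
  proof (cases "d = c")
    case True then show ?thesis by (simp add: wv_top)
  next
    case False
    then have "d < c" using Suc.prems by simp
    then show ?thesis using Suc.IH[of "mx T c y"] by simp
  qed
qed

lemma wv_cong: "(\<And>i d. d < c \<Longrightarrow> T1 (i,d) = T (i,d)) \<Longrightarrow> wv T1 c y d = wv T c y d"
proof (induction c arbitrary: y)
  case 0 then show ?case by simp
next
  case (Suc c)
  have "mx T1 c y = mx T c y" unfolding mx_def using Suc.prems by simp
  then show ?case using Suc.IH[of "mx T c y"] Suc.prems by simp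
qed

lemma mx_props:
  assumes "finite (ran T)" "{v. \<exists>i. T (i,d) = Some v \<and> v < y} \<noteq> {}"
  shows "mx T d y \<in> colset T d" "mx T d y < y" "\<And>w. w \<in> colset T d \<Longrightarrow> w < y \<Longrightarrow> w \<le> mx T d y"
proof -
  let ?S = "{v. \<exists>i. T (i,d) = Some v \<and> v < y}"
  have "?S \<subseteq> ran T" unfolding ran_def by blast
  then have fin: "finite ?S" using assms(1) finite_subset by blast
  have "mx T d y \<in> ?S" unfolding mx_def using Max_in[OF fin assms(2)] .
  then show "mx T d y \<in> colset T d" "mx T d y < y" unfolding colset_def by auto
  show "\<And>w. w \<in> colset T d \<Longrightarrow> w < y \<Longrightarrow> w \<le> mx T d y"
    unfolding mx_def colset_def using Max_ge[OF fin] by blast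
qed

lemma bump_wv:
  "Inv T c p y \<Longrightarrow> bump T c y = (T', x) \<Longrightarrow> x = wv T c y 0 \<and> (\<forall>i d. c \<le> d \<longrightarrow> T' (i,d) = T (i,d))
    \<and> (\<forall>d<c. colset T' d = colset T d - {wv T c y d} \<union> {wv T c y (Suc d)}
         \<and> {v. \<exists>i. T (i,d) = Some v \<and> v < wv T c y (Suc d)} \<noteq> {})"
proof (induction c arbitrary: T p y)
  case 0
  then show ?case by auto
next
  case (Suc c)
  obtain q v where ne: "{v. \<exists>i. T (i,c) = Some v \<and> v < y} \<noteq> {}" and M: "Max {v. \<exists>i. T (i,c) = Some v \<and> v < y} = v"
    and q: "T (q,c) = Some v" and th: "(THE i. T (i,c) = Some v) = q" and pq: "p \<le> q" and vy: "v < y"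
    and I': "Inv (T((q,c) \<mapsto> y)) c q v"
    using step[OF Suc.prems(1)] by blast
  have yT: "young T" using Suc.prems(1) unfolding Inv_def by blast
  have "bump T (Suc c) y = bump (T((q,c) \<mapsto> y)) c v" using M th by (simp add: Let_def)
  then have b: "bump (T((q,c) \<mapsto> y)) c v = (T', x)" using Suc.prems(2) by simp
  let ?T1 = "T((q,c) \<mapsto> y)"
  have IH: "x = wv ?T1 c v 0" "\<forall>i d. c \<le> d \<longrightarrow> T' (i,d) = ?T1 (i,d)"
     "\<forall>d<c. colset T' d = colset ?T1 d - {wv ?T1 c v d} \<union> {wv ?T1 c v (Suc d)}
         \<and> {w. \<exists>i. ?T1 (i,d) = Some w \<and> w < wv ?T1 c v (Suc d)} \<noteq> {}"
    using Suc.IH[OF I' b] by blast+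
  have mxv: "mx T c y = v" unfolding mx_def using M .
  have agree: "\<And>i d. d < c \<Longrightarrow> ?T1 (i,d) = T (i,d)" by simp
  have wc: "\<And>d. wv ?T1 c v d = wv T c v d" by (rule wv_cong) simp
  have wS: "\<And>d. d \<noteq> Suc c \<Longrightarrow> wv T (Suc c) y d = wv T c v d" using mxv by simp
  have cs1: "\<And>d. d < c \<Longrightarrow> colset ?T1 d = colset T d" unfolding colset_def by auto
  have "x = wv T (Suc c) y 0" using IH(1) wc wS by simp
  moreover have "\<forall>i d. Suc c \<le> d \<longrightarrow> T' (i,d) = T (i,d)" using IH(2) by auto
  moreover have "\<forall>d<Suc c. colset T' d = colset T d - {wv T (Suc c) y d} \<union> {wv T (Suc c) y (Suc d)}
         \<and> {v. \<exists>i. T (i,d) = Some v \<and> v < wv T (Suc c) y (Suc d)} \<noteq> {}"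
  proof (intro allI impI)
    fix d assume d: "d < Suc c"
    show "colset T' d = colset T d - {wv T (Suc c) y d} \<union> {wv T (Suc c) y (Suc d)}
         \<and> {v. \<exists>i. T (i,d) = Some v \<and> v < wv T (Suc c) y (Suc d)} \<noteq> {}"
    proof (cases "d = c")
      case True
      have c1: "colset T' c = colset ?T1 c" using IH(2) unfolding colset_def by auto
      have c2: "colset ?T1 c = colset T c - {v} \<union> {y}"
      proof -
        have "\<And>i w. T (i,c) = Some w \<Longrightarrow> w = v \<Longrightarrow> i = q" using young_inj[OF yT _ q] by blast
        note u = this
        show ?thesis
        proof (intro equalityI subsetI)
          fix w assume "w \<in> colset ?T1 c"
          then obtain i where i: "?T1 (i,c) = Some w" unfolding colset_def by blast
          show "w \<in> colset T c - {v} \<union> {y}"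
          proof (cases "i = q")
            case True then show ?thesis using i by simp
          next
            case False then have "T (i,c) = Some w" using i by simp
            then show ?thesis using u False unfolding colset_def by blast
          qed
        next
          fix w assume w: "w \<in> colset T c - {v} \<union> {y}"
          show "w \<in> colset ?T1 c"
          proof (cases "w = y")
            case True
            have "?T1 (q,c) = Some w" using True by simp
            then show ?thesis unfolding colset_def by blast
          next
            case False
            then obtain i where i: "T (i,c) = Some w" "w \<noteq> v" using w unfolding colset_def by blast
            then have "i \<noteq> q" using q by auto
            then have "?T1 (i,c) = Some w" using i by simp
            then show ?thesis unfolding colset_def by blast
          qed
        qed
      qed
      have "wv T (Suc c) y c = v" using wS[of c] wv_top by simp
      moreover have "wv T (Suc c) y (Suc c) = y" by simp
      ultimately show ?thesis using True c1 c2 ne by simp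
    next
      case False
      then have dc: "d < c" using d by simp
      have h3: "colset T' d = colset ?T1 d - {wv ?T1 c v d} \<union> {wv ?T1 c v (Suc d)}"
         "{w. \<exists>i. ?T1 (i,d) = Some w \<and> w < wv ?T1 c v (Suc d)} \<noteq> {}"
        using IH(3) dc by blast+
      have "colset T' d = colset T d - {wv T c v d} \<union> {wv T c v (Suc d)}"
        using h3(1) unfolding cs1[OF dc] wc .
      moreover have "{w. \<exists>i. ?T1 (i,d) = Some w \<and> w < wv ?T1 c v (Suc d)} = {w. \<exists>i. T (i,d) = Some w \<and> w < wv T c v (Suc d)}"
        unfolding wc using agree[OF dc] by simp
      ultimately have "colset T' d = colset T d - {wv T c v d} \<union> {wv T c v (Suc d)}" "{w. \<exists>i. T (i,d) = Some w \<and> w < wv T c v (Suc d)} \<noteq> {}"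
        using h3(2) by auto
      moreover have "wv T (Suc c) y d = wv T c v d" "wv T (Suc c) y (Suc d) = wv T c v (Suc d)"
        using wS dc by auto
      ultimately show ?thesis by simp
    qed
  qed
  ultimately show ?case by blast
qed

lemma geoA:
  assumes f: "ferrers D" and b1: "(i1,j1) \<in> D" and f1: "ferrers (D - {(i1,j1)})" and b2: "(i2,j2) \<in> D - {(i1,j1)}"
    and f2: "ferrers (D - {(i1,j1)} - {(i2,j2)})" and lt: "i2 < i1"
  shows "j1 \<le> j2"
proof (rule ccontr)
  assume "\<not> j1 \<le> j2"
  then have "(i2, Suc j2) \<in> D" using ferrersD[OF f b1, of i2 "Suc j2"] lt by auto
  then have "(i2, Suc j2) \<in> D - {(i1,j1)} - {(i2,j2)}" using lt by auto
  then have "(i2, j2) \<in> D - {(i1,j1)} - {(i2,j2)}" using ferrersD[OF f2, of i2 "Suc j2" i2 j2] by auto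
  then show False by simp
qed

lemma geoB:
  assumes f: "ferrers D" and b1: "(i1,j1) \<in> D" and f1: "ferrers (D - {(i1,j1)})" and b2: "(i2,j2) \<in> D - {(i1,j1)}"
    and le: "i1 \<le> i2"
  shows "j2 < j1"
proof (rule ccontr)
  assume nl: "\<not> j2 < j1"
  show False
  proof (cases "i1 = i2")
    case True
    then have "j1 < j2" using nl b2 by auto
    then have "(i1, Suc j1) \<in> D" using ferrersD[OF f, of i2 j2 i1 "Suc j1"] b2 True by auto
    then have "(i1, Suc j1) \<in> D - {(i1,j1)}" by auto
    then have "(i1, j1) \<in> D - {(i1,j1)}" using ferrersD[OF f1, of i1 "Suc j1" i1 j1] by auto
    then show False by simp
  next
    case False
    then have "(Suc i1, j1) \<in> D" using ferrersD[OF f, of i2 j2 "Suc i1" j1] b2 le nl by auto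
    then have "(Suc i1, j1) \<in> D - {(i1,j1)}" by auto
    then have "(i1, j1) \<in> D - {(i1,j1)}" using ferrersD[OF f1, of "Suc i1" j1 i1 j1] by auto
    then show False by simp
  qed
qed

lemma corner_below:
  assumes f: "ferrers D" and f1: "ferrers (D - {(i1,j1)})" and b1: "(i1,j1) \<in> D" and r: "(r,j1) \<in> D"
  shows "r \<le> i1"
proof (rule ccontr)
  assume "\<not> r \<le> i1"
  then have "(Suc i1, j1) \<in> D" using ferrersD[OF f r, of "Suc i1" j1] by auto
  then have "(Suc i1, j1) \<in> D - {(i1,j1)}" by auto
  then have "(i1, j1) \<in> D - {(i1,j1)}" using ferrersD[OF f1, of "Suc i1" j1 i1 j1] by auto
  then show False by simp
qed

lemma CC:
  assumes yT: "young T0" and f: "ferrers (dom T0)" and b1: "(i1,j1) \<in> dom T0" and fb1: "ferrers (dom T0 - {(i1,j1)})"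
    and b2: "(i2,j2) \<in> dom T0 - {(i1,j1)}" and fb2: "ferrers (dom T0 - {(i1,j1)} - {(i2,j2)})"
    and cd1: "col_delete T0 (i1,j1) = (T1, x1)" and cd2: "col_delete T1 (i2,j2) = (T2, x2)"
  shows "x2 < x1 \<longleftrightarrow> i2 < i1"
proof -
  note C1 = col_delete_main[OF yT f b1 fb1 cd1]
  have yT1: "young T1" and dT1: "dom T1 = dom T0 - {(i1,j1)}" using C1 by blast+
  obtain y1 where y1: "T0 (i1,j1) = Some y1" using b1 by auto
  let ?T0' = "T0((i1,j1) := None)"
  have I1: "Inv ?T0' j1 i1 y1" using init_Inv[OF yT f y1 fb1] by simp
  have bb1: "bump ?T0' j1 y1 = (T1, x1)" using cd1 y1 unfolding col_delete_def by simp
  define w where "w = wv ?T0' j1 y1"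
  have W: "x1 = w 0" "\<forall>i d. j1 \<le> d \<longrightarrow> T1 (i,d) = ?T0' (i,d)"
    "\<forall>d<j1. colset T1 d = colset ?T0' d - {w d} \<union> {w (Suc d)}
         \<and> {v. \<exists>i. ?T0' (i,d) = Some v \<and> v < w (Suc d)} \<noteq> {}"
    using bump_wv[OF I1 bb1] unfolding w_def by blast+
  have finT0': "finite (ran ?T0')" using I1 ferrers_fin finite_ran unfolding Inv_def by blast
  have wrec: "\<And>d. d < j1 \<Longrightarrow> w d = mx ?T0' d (w (Suc d))" unfolding w_def using wv_rec by blast
  have wtop: "w j1 = y1" unfolding w_def using wv_top by blast
  have wP: "\<And>d. d < j1 \<Longrightarrow> w d \<in> colset ?T0' d \<and> w d < w (Suc d) \<and>
        (\<forall>z. z \<in> colset ?T0' d \<longrightarrow> z < w (Suc d) \<longrightarrow> z \<le> w d)"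
  proof -
    fix d assume d: "d < j1"
    then have ne: "{v. \<exists>i. ?T0' (i,d) = Some v \<and> v < w (Suc d)} \<noteq> {}" using W(3) by blast
    note m = mx_props[OF finT0' ne]
    show "w d \<in> colset ?T0' d \<and> w d < w (Suc d) \<and>
        (\<forall>z. z \<in> colset ?T0' d \<longrightarrow> z < w (Suc d) \<longrightarrow> z \<le> w d)"
      unfolding wrec[OF d] using m by blast
  qed
  have fT1: "ferrers (dom T1)" using dT1 fb1 by simp
  have b2': "(i2,j2) \<in> dom T1" using dT1 b2 by simp
  have fb2': "ferrers (dom T1 - {(i2,j2)})" using dT1 fb2 by simp
  obtain y2 where y2: "T1 (i2,j2) = Some y2" using b2' by auto
  let ?T1' = "T1((i2,j2) := None)"
  have I2: "Inv ?T1' j2 i2 y2" using init_Inv[OF yT1 fT1 y2 fb2'] by simp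
  have bb2: "bump ?T1' j2 y2 = (T2, x2)" using cd2 y2 unfolding col_delete_def by simp
  define u where "u = wv ?T1' j2 y2"
  have U: "x2 = u 0"
    "\<forall>d<j2. {v. \<exists>i. ?T1' (i,d) = Some v \<and> v < u (Suc d)} \<noteq> {}"
    using bump_wv[OF I2 bb2] unfolding u_def by blast+
  have finT1': "finite (ran ?T1')" using I2 ferrers_fin finite_ran unfolding Inv_def by blast
  have urec: "\<And>d. d < j2 \<Longrightarrow> u d = mx ?T1' d (u (Suc d))" unfolding u_def using wv_rec by blast
  have utop: "u j2 = y2" unfolding u_def using wv_top by blast
  have uP: "\<And>d. d < j2 \<Longrightarrow> u d \<in> colset ?T1' d \<and> u d < u (Suc d) \<and>
        (\<forall>z. z \<in> colset ?T1' d \<longrightarrow> z < u (Suc d) \<longrightarrow> z \<le> u d)"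
  proof -
    fix d assume d: "d < j2"
    then have ne: "{v. \<exists>i. ?T1' (i,d) = Some v \<and> v < u (Suc d)} \<noteq> {}" using U(2) by blast
    note m = mx_props[OF finT1' ne]
    show "u d \<in> colset ?T1' d \<and> u d < u (Suc d) \<and>
        (\<forall>z. z \<in> colset ?T1' d \<longrightarrow> z < u (Suc d) \<longrightarrow> z \<le> u d)"
      unfolding urec[OF d] using m by blast
  qed
  have cs1': "\<And>d. d \<noteq> j2 \<Longrightarrow> colset ?T1' d = colset T1 d" unfolding colset_def by auto
  have cs0': "\<And>d. d \<noteq> j1 \<Longrightarrow> colset ?T0' d = colset T0 d" unfolding colset_def by auto
  show ?thesis
  proof (cases "i2 < i1")
    case True
    have j12: "j1 \<le> j2" using geoA[OF f b1 fb1 b2 fb2 True] .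
    have A: "\<And>d. d \<le> j1 \<Longrightarrow> u d < w d"
    proof -
      fix d assume "d \<le> j1"
      then show "u d < w d"
      proof (induction d rule: inc_induct)
        case base
        show ?case
        proof (cases "j2 = j1")
          case True
          have "T1 (i2,j1) = ?T0' (i2,j1)" using W(2) by simp
          also have "\<dots> = T0 (i2,j1)" using `i2 < i1` by simp
          finally have "T0 (i2,j1) = Some y2" using y2 True by simp
          then have "y2 < y1" using youngD[OF yT _ y1] `i2 < i1` by fastforce
          then show ?thesis using utop wtop True by simp
        next
          case False
          then have "j1 < j2" using j12 by simp
          then have "u j1 \<in> colset ?T1' j1" using uP by blast
          then have "u j1 \<in> colset T1 j1" using cs1'[of j1] False by simp
          then obtain r where r: "T1 (r,j1) = Some (u j1)" unfolding colset_def by blast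
          then have r0: "T0 (r,j1) = Some (u j1)" "(r,j1) \<noteq> (i1,j1)" using W(2) by (auto split: if_splits)
          then have "r \<le> i1" using corner_below[OF f fb1 b1, of r] by auto
          then have "r < i1" using r0 by auto
          then have "u j1 < y1" using youngD[OF yT r0(1) y1] by auto
          then show ?thesis using wtop by simp
        qed
      next
        case (step n)
        have n2: "n < j2" using step j12 by simp
        have un: "u n \<in> colset T1 n" using uP[OF n2] cs1'[of n] n2 by simp
        have "colset T1 n = colset ?T0' n - {w n} \<union> {w (Suc n)}" using W(3) step by blast
        moreover have "u n < w (Suc n)" using uP[OF n2] step.IH by simp
        ultimately have "u n \<in> colset ?T0' n" "u n \<noteq> w n" using un by auto
        then show ?case using wP[OF step(2)] `u n < w (Suc n)` by (meson le_neq_implies_less)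
      qed
    qed
    have "x2 < x1" using A[of 0] U(1) W(1) by simp
    then show ?thesis using True by simp
  next
    case False
    have j21: "j2 < j1" using geoB[OF f b1 fb1 b2] False by simp
    have B: "\<And>d. d \<le> j2 \<Longrightarrow> w (Suc d) \<le> u d"
    proof -
      fix d assume "d \<le> j2"
      then show "w (Suc d) \<le> u d"
      proof (induction d rule: inc_induct)
        case base
        have "w (Suc j2) \<in> colset T1 j2" using W(3) j21 by blast
        then obtain r where r: "T1 (r,j2) = Some (w (Suc j2))" unfolding colset_def by blast
        have "r \<le> i2" using corner_below[OF fT1 fb2' b2', of r] r by auto
        then have "w (Suc j2) \<le> y2"
          using youngD[OF yT1 r y2] r y2 by (cases "r = i2") auto
        then show ?case using utop by simp
      next
        case (step n)
        have n2: "n < j2" using step by simp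
        have "w (Suc n) \<in> colset T1 n" using W(3) n2 j21 by auto
        then have "w (Suc n) \<in> colset ?T1' n" using cs1'[of n] n2 by simp
        moreover have "w (Suc n) < w (Suc (Suc n))" using wP[of "Suc n"] n2 j21 by simp
        ultimately show ?case using uP[OF n2] step.IH by simp
      qed
    qed
    have "w 0 < w (Suc 0)" using wP[of 0] j21 by simp
    then have "x1 < x2" using B[of 0] U(1) W(1) by simp
    then show ?thesis using False by simp
  qed
qed




lemma osc_step: "osc_tableau r mus \<Longrightarrow> t < r \<Longrightarrow> \<exists>b. (mus ! t - mus ! Suc t) \<union> (mus ! Suc t - mus ! t) = {b}"
proof -
  assume osc: "osc_tableau r mus" and t: "t < r"
  have "Suc t \<in> {1..r}" using t by simp
  moreover have "\<forall>k \<in> {1..r}. \<exists>b. (mus ! (k - 1) - mus ! k) \<union> (mus ! k - mus ! (k - 1)) = {b}"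
    using osc unfolding osc_tableau_def by (elim conjE)
  ultimately have "\<exists>b. (mus ! (Suc t - 1) - mus ! Suc t) \<union> (mus ! Suc t - mus ! (Suc t - 1)) = {b}"
    by (rule bspec[rotated])
  then show ?thesis by (simp only: diff_Suc_1)
qed

lemma osc_ferrers: "osc_tableau r mus \<Longrightarrow> t \<le> r \<Longrightarrow> ferrers (mus ! t)"
  unfolding osc_tableau_def by blast

lemma sund_exp: "sundaram mus t = (\<iota>, T) \<Longrightarrow> expansion mus (Suc t) \<Longrightarrow>
   sundaram mus (Suc t) = (\<iota>, T(box mus (Suc t) \<mapsto> Suc t))"
  by (simp add: Let_def)

lemma sund_con: "sundaram mus t = (\<iota>, T) \<Longrightarrow> \<not> expansion mus (Suc t) \<Longrightarrow> col_delete T (box mus (Suc t)) = (T', x) \<Longrightarrow>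
   sundaram mus (Suc t) = (\<iota>(x \<mapsto> Suc t, Suc t \<mapsto> x), T')"
  by (simp add: Let_def)

lemma bx: "(mus ! t - mus ! Suc t) \<union> (mus ! Suc t - mus ! t) = {b0} \<Longrightarrow> box mus (Suc t) = b0"
  unfolding box_def by simp
lemma s1: "(A - B) \<union> (B - A) = {b0} \<Longrightarrow> b0 \<in> B \<Longrightarrow> b0 \<notin> A \<and> B = insert b0 A"
proof -
  assume h: "(A - B) \<union> (B - A) = {b0}" "b0 \<in> B"
  have e: "\<And>x. (x \<in> A \<and> x \<notin> B \<or> x \<in> B \<and> x \<notin> A) \<longleftrightarrow> x = b0"
    using h(1) unfolding set_eq_iff by simp
  have "b0 \<notin> A" using e[of b0] h(2) by simp
  moreover have "\<And>x. x \<in> B \<longleftrightarrow> x \<in> insert b0 A"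
  proof -
    fix x show "x \<in> B \<longleftrightarrow> x \<in> insert b0 A"
    proof (cases "x = b0")
      case True then show ?thesis using h(2) by simp
    next
      case False then show ?thesis using e[of x] by auto
    qed
  qed
  ultimately show ?thesis by blast
qed
lemma s2: "(A - B) \<union> (B - A) = {b0} \<Longrightarrow> b0 \<notin> B \<Longrightarrow> b0 \<in> A \<and> B = A - {b0}"
proof -
  assume h: "(A - B) \<union> (B - A) = {b0}" "b0 \<notin> B"
  have e: "\<And>x. (x \<in> A \<and> x \<notin> B \<or> x \<in> B \<and> x \<notin> A) \<longleftrightarrow> x = b0"
    using h(1) unfolding set_eq_iff by simp
  show ?thesis using e h(2) unfolding set_eq_iff by (metis Diff_iff singletonD singletonI)
qed
lemma box_facts:
  assumes osc: "osc_tableau r mus" and t: "t < r"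
  shows "(expansion mus (Suc t) \<and> \<not> contraction mus (Suc t) \<and> box mus (Suc t) \<notin> mus ! t \<and> mus ! Suc t = insert (box mus (Suc t)) (mus ! t))
       \<or> (\<not> expansion mus (Suc t) \<and> contraction mus (Suc t) \<and> box mus (Suc t) \<in> mus ! t \<and> mus ! Suc t = mus ! t - {box mus (Suc t)})"
proof -
  obtain b0 where b0: "(mus ! t - mus ! Suc t) \<union> (mus ! Suc t - mus ! t) = {b0}"
    using osc_step[OF osc t] by blast
  have bx: "box mus (Suc t) = b0" using bx[OF b0] .
  have ex: "expansion mus (Suc t) \<longleftrightarrow> b0 \<in> mus ! Suc t" unfolding expansion_def bx ..
  have co: "contraction mus (Suc t) \<longleftrightarrow> b0 \<in> mus ! t" unfolding contraction_def bx by simp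
  show ?thesis
  proof (cases "b0 \<in> mus ! Suc t")
    case True
    then show ?thesis unfolding ex co bx using s1[OF b0 True] True by simp
  next
    case False
    then show ?thesis unfolding ex co bx using s2[OF b0 False] False by simp
  qed
qed




lemma young_empty: "young Map.empty"
  unfolding young_def by simp

lemma young_add:
  assumes yT: "young T" and f: "ferrers (dom T)" and b: "b \<notin> dom T" and lt: "\<And>v. v \<in> ran T \<Longrightarrow> v < n"
  shows "young (T(b \<mapsto> n))"
  unfolding young_def
proof (intro conjI allI impI)
  have nr: "n \<notin> ran T" using lt by blast
  show "inj_on (T(b \<mapsto> n)) (dom (T(b \<mapsto> n)))"
    unfolding inj_on_def
  proof (intro ballI impI)
    fix a c assume a: "a \<in> dom (T(b \<mapsto> n))" and c: "c \<in> dom (T(b \<mapsto> n))" and e: "(T(b \<mapsto> n)) a = (T(b \<mapsto> n)) c"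
    show "a = c"
    proof (cases "a = b"; cases "c = b")
      assume "a = b" "c \<noteq> b"
      then have "T c = Some n" using e by simp
      then show ?thesis using nr unfolding ran_def by blast
    next
      assume "a \<noteq> b" "c = b"
      then have "T a = Some n" using e by simp
      then show ?thesis using nr unfolding ran_def by blast
    next
      assume "a \<noteq> b" "c \<noteq> b"
      then obtain w where "T a = Some w" "T c = Some w" using e a by (auto simp: dom_def)
      then show ?thesis using young_inj[OF yT] by blast
    qed simp
  qed
next
  fix i j i' j' v w
  assume h1: "(T(b \<mapsto> n)) (i,j) = Some v" and h2: "(T(b \<mapsto> n)) (i',j') = Some w" and le: "i \<le> i'" "j \<le> j'"
    and ne: "(i,j) \<noteq> (i',j')"
  show "v < w"
  proof (cases "(i,j) = b")
    case True
    then have "T (i',j') = Some w" using h2 ne by auto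
    then have "(i,j) \<in> dom T" using ferrersD[OF f, of i' j' i j] le by auto
    then show ?thesis using b True by simp
  next
    case False
    then have Tv: "T (i,j) = Some v" using h1 by (auto split: if_splits)
    show ?thesis
    proof (cases "(i',j') = b")
      case True
      then have "w = n" using h2 by simp
      then show ?thesis using lt[of v] Tv unfolding ran_def by blast
    next
      case False
      then have "T (i',j') = Some w" using h2 by (auto split: if_splits)
      then show ?thesis using youngD[OF yT Tv] le ne by blast
    qed
  qed
qed

lemma G:
  "osc_tableau r mus \<Longrightarrow> t \<le> r \<Longrightarrow> sundaram mus t = (\<iota>, T) \<Longrightarrow>
    dom T = mus ! t \<and> young T \<and> ran T \<inter> dom \<iota> = {} \<and> ran T \<union> dom \<iota> = {1..t} \<and> ran \<iota> \<subseteq> {1..t}"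
proof (induction t arbitrary: \<iota> T)
  case 0
  have "\<iota> = Map.empty" "T = Map.empty" using "0.prems"(3) by simp_all
  moreover have "mus ! 0 = {}" using "0.prems"(1) unfolding osc_tableau_def by blast
  ultimately show ?case using young_empty by simp
next
  case (Suc t)
  obtain \<iota>0 T0 where s0: "sundaram mus t = (\<iota>0, T0)" by (cases "sundaram mus t")
  have IH: "dom T0 = mus ! t" "young T0" "ran T0 \<inter> dom \<iota>0 = {}" "ran T0 \<union> dom \<iota>0 = {1..t}" "ran \<iota>0 \<subseteq> {1..t}"
  proof -
    have "t \<le> r" using Suc.prems(2) by simp
    note h = Suc.IH[OF Suc.prems(1) this s0]
    show "dom T0 = mus ! t" "young T0" "ran T0 \<inter> dom \<iota>0 = {}" "ran T0 \<union> dom \<iota>0 = {1..t}" "ran \<iota>0 \<subseteq> {1..t}"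
      using h by blast+
  qed
  have tr: "t < r" using Suc.prems(2) by simp
  have f0: "ferrers (mus ! t)" using osc_ferrers[OF Suc.prems(1)] tr by simp
  have f1: "ferrers (mus ! Suc t)" using osc_ferrers[OF Suc.prems(1) Suc.prems(2)] .
  let ?b = "box mus (Suc t)"
  show ?case
  proof (cases "expansion mus (Suc t)")
    case True
    have bf: "?b \<notin> mus ! t" "mus ! Suc t = insert ?b (mus ! t)" using box_facts[OF Suc.prems(1) tr] True by auto
    have e: "\<iota> = \<iota>0" "T = T0(?b \<mapsto> Suc t)" using sund_exp[OF s0 True] Suc.prems(3) by auto
    have lt: "\<And>v. v \<in> ran T0 \<Longrightarrow> v < Suc t"
    proof -
      fix v assume "v \<in> ran T0" then have "v \<in> {1..t}" using IH(4) by blast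
      then show "v < Suc t" by simp
    qed
    have yT: "young T" unfolding e using young_add[OF IH(2) _ _ lt] IH(1) f0 bf by simp
    have rT: "ran T = insert (Suc t) (ran T0)" 
    proof -
      have "T0 ?b = None" using bf(1) IH(1) by auto
      then show ?thesis unfolding e by (rule ran_map_upd)
    qed
    have st: "Suc t \<notin> dom \<iota>0"
    proof
      assume "Suc t \<in> dom \<iota>0" then have "Suc t \<in> {1..t}" using IH(4) by blast
      then show False by simp
    qed
    have iv: "{1..Suc t} = insert (Suc t) {1..t}" by (rule atLeastAtMostSuc_conv) simp
    have d1: "dom T = mus ! Suc t" unfolding e bf(2) using IH(1) by simp
    have d2: "ran T \<inter> dom \<iota> = {}" unfolding rT e(1) using IH(3) st by blast
    have d3: "ran T \<union> dom \<iota> = {1..Suc t}" unfolding rT e(1) iv using IH(4) by blast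
    have d4: "ran \<iota> \<subseteq> {1..Suc t}" unfolding e(1) iv using IH(5) by blast
    show ?thesis using d1 d2 d3 d4 yT by blast
  next
    case False
    have bf: "?b \<in> mus ! t" "mus ! Suc t = mus ! t - {?b}" using box_facts[OF Suc.prems(1) tr] False by auto
    obtain T' x where cd: "col_delete T0 ?b = (T', x)" by (cases "col_delete T0 ?b")
    have e: "\<iota> = \<iota>0(x \<mapsto> Suc t, Suc t \<mapsto> x)" "T = T'" using sund_con[OF s0 False cd] Suc.prems(3) by auto
    have ff: "ferrers (dom T0)" "?b \<in> dom T0" "ferrers (dom T0 - {?b})" using IH(1) f0 f1 bf by simp_all
    note C = col_delete_main[OF IH(2) ff cd]
    have C': "young T'" "dom T' = dom T0 - {?b}" "x \<in> ran T0" "ran T' = ran T0 - {x}"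
      using C(1-4) by blast+
    have xt: "x \<in> {1..t}" "x \<notin> dom \<iota>0" using C'(3) IH(3,4) by blast+
    have st: "Suc t \<notin> dom \<iota>0" "Suc t \<notin> ran T0"
    proof -
      have "Suc t \<notin> {1..t}" by simp
      then show "Suc t \<notin> dom \<iota>0" "Suc t \<notin> ran T0" using IH(4) by blast+
    qed
    have iv: "{1..Suc t} = insert (Suc t) {1..t}" by (rule atLeastAtMostSuc_conv) simp
    have di: "dom \<iota> = insert x (insert (Suc t) (dom \<iota>0))" unfolding e by auto
    have ri: "ran \<iota> \<subseteq> insert x (insert (Suc t) (ran \<iota>0))" unfolding e(1) ran_def by auto
    have d1: "dom T = mus ! Suc t" unfolding e(2) C'(2) bf(2) IH(1) ..
    have d2: "ran T \<inter> dom \<iota> = {}" unfolding e(2) C'(4) di using IH(3) st by blast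
    have d3: "ran T \<union> dom \<iota> = {1..Suc t}" unfolding e(2) C'(4) di iv using IH(4) C'(3) by blast
    have d4: "ran \<iota> \<subseteq> {1..Suc t}" using ri iv IH(5) xt(1) by blast
    show ?thesis using d1 d2 d3 d4 C'(1) e(2) by blast
  qed
qed




lemma Des_pair_iff: "k \<in> Des_pair (\<iota>, T) \<longleftrightarrow>
   (k \<in> dom \<iota> \<and> Suc k \<in> dom \<iota> \<and> the (\<iota> (Suc k)) < the (\<iota> k))
 \<or> (k \<in> ran T \<and> Suc k \<in> ran T \<and> row_of T k < row_of T (Suc k))
 \<or> (k \<in> ran T \<and> Suc k \<in> dom \<iota>)"
  unfolding Des_pair_def Des_inv_def Des_tab_def Des_sets_def by auto

lemma pres:
  assumes osc: "osc_tableau r mus" and tr: "t < r" and k1: "1 \<le> k" and kt: "Suc k \<le> t"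
  shows "k \<in> Des_pair (sundaram mus (Suc t)) \<longleftrightarrow> k \<in> Des_pair (sundaram mus t)"
proof -
  obtain \<iota>0 T0 where s0: "sundaram mus t = (\<iota>0, T0)" by (cases "sundaram mus t")
  have G0: "dom T0 = mus ! t" "young T0" "ran T0 \<inter> dom \<iota>0 = {}" "ran T0 \<union> dom \<iota>0 = {1..t}" "ran \<iota>0 \<subseteq> {1..t}"
    using G[OF osc _ s0] tr by auto
  have km: "k \<in> ran T0 \<union> dom \<iota>0" "Suc k \<in> ran T0 \<union> dom \<iota>0" using G0(4) k1 kt by auto
  have kd: "k \<in> ran T0 \<longleftrightarrow> k \<notin> dom \<iota>0" "Suc k \<in> ran T0 \<longleftrightarrow> Suc k \<notin> dom \<iota>0" using km G0(3) by blast+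
  have nt: "k \<noteq> Suc t" "Suc k \<noteq> Suc t" using kt by auto
  let ?b = "box mus (Suc t)"
  have f0: "ferrers (mus ! t)" using osc_ferrers[OF osc] tr by simp
  have f1: "ferrers (mus ! Suc t)" using osc_ferrers[OF osc] tr by simp
  show ?thesis
  proof (cases "expansion mus (Suc t)")
    case True
    have bf: "?b \<notin> mus ! t" using box_facts[OF osc tr] True by auto
    have s1: "sundaram mus (Suc t) = (\<iota>0, T0(?b \<mapsto> Suc t))" using sund_exp[OF s0 True] .
    have Tb: "T0 ?b = None" using bf G0(1) by auto
    have rT: "ran (T0(?b \<mapsto> Suc t)) = insert (Suc t) (ran T0)" using Tb by (rule ran_map_upd)
    have rw: "\<And>w. w \<noteq> Suc t \<Longrightarrow> row_of (T0(?b \<mapsto> Suc t)) w = row_of T0 w"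
      by (rule row_of_same) (use Tb in auto)
    show ?thesis unfolding s1 s0 Des_pair_iff rT using rw nt by simp
  next
    case False
    have bf: "?b \<in> mus ! t" "mus ! Suc t = mus ! t - {?b}" using box_facts[OF osc tr] False by auto
    obtain T1 x where cd: "col_delete T0 ?b = (T1, x)" by (cases "col_delete T0 ?b")
    have s1: "sundaram mus (Suc t) = (\<iota>0(x \<mapsto> Suc t, Suc t \<mapsto> x), T1)" using sund_con[OF s0 False cd] .
    have ff: "ferrers (dom T0)" "?b \<in> dom T0" "ferrers (dom T0 - {?b})" using G0(1) f0 f1 bf by simp_all
    note C = col_delete_main[OF G0(2) ff cd]
    have xr1: "x \<in> ran T0" "x \<notin> dom \<iota>0" using C(3) G0(3) by auto
    have "x \<in> {1..t}" using xr1(1) G0(4) by blast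
    then have xr: "x \<in> ran T0" "x \<notin> dom \<iota>0" "x \<noteq> Suc t" using xr1 by auto
    let ?i = "\<iota>0(x \<mapsto> Suc t, Suc t \<mapsto> x)"
    have di: "\<And>w. w \<in> dom ?i \<longleftrightarrow> w = x \<or> w = Suc t \<or> w \<in> dom \<iota>0" by auto
    have iv: "\<And>w. w \<noteq> x \<Longrightarrow> w \<noteq> Suc t \<Longrightarrow> ?i w = \<iota>0 w" by auto
    have ix: "?i x = Some (Suc t)" using xr by auto
    have rT1: "\<And>w. w \<in> ran T1 \<longleftrightarrow> w \<in> ran T0 \<and> w \<noteq> x" using C(4) by auto
    have ile: "\<And>w v. \<iota>0 w = Some v \<Longrightarrow> v \<le> t" using G0(5) unfolding ran_def by auto
    have e1: "k \<in> Des_pair (sundaram mus (Suc t)) \<longleftrightarrow>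
       (k \<in> dom ?i \<and> Suc k \<in> dom ?i \<and> the (?i (Suc k)) < the (?i k))
     \<or> (k \<in> ran T1 \<and> Suc k \<in> ran T1 \<and> row_of T1 k < row_of T1 (Suc k))
     \<or> (k \<in> ran T1 \<and> Suc k \<in> dom ?i)" unfolding s1 Des_pair_iff ..
    have e0: "k \<in> Des_pair (sundaram mus t) \<longleftrightarrow>
       (k \<in> dom \<iota>0 \<and> Suc k \<in> dom \<iota>0 \<and> the (\<iota>0 (Suc k)) < the (\<iota>0 k))
     \<or> (k \<in> ran T0 \<and> Suc k \<in> ran T0 \<and> row_of T0 k < row_of T0 (Suc k))
     \<or> (k \<in> ran T0 \<and> Suc k \<in> dom \<iota>0)" unfolding s0 Des_pair_iff ..
    show ?thesis
    proof (cases "k \<in> dom \<iota>0")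
      case kI: True
      then have kx: "k \<noteq> x" "k \<notin> ran T0" using xr kd by auto
      show ?thesis
      proof (cases "Suc k \<in> dom \<iota>0")
        case True
        then have "Suc k \<noteq> x" using xr by auto
        then show ?thesis unfolding e1 e0 using kI True kx iv nt rT1 di by auto
      next
        case False
        have o: "\<not> (k \<in> Des_pair (sundaram mus t))" unfolding e0 using kI False kx by auto
        have "\<not> (k \<in> Des_pair (sundaram mus (Suc t)))"
        proof (cases "x = Suc k")
          case True
          obtain v where v: "\<iota>0 k = Some v" using kI by auto
          have "?i k = Some v" using iv[of k] kx nt v by simp
          moreover have "?i (Suc k) = Some (Suc t)" using ix True by simp
          moreover have "v \<le> t" using ile[OF v] .
          ultimately show ?thesis unfolding e1 using rT1 kx by auto
        next
          case False2: False
          show ?thesis unfolding e1 using rT1 kx di False False2 nt by auto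
        qed
        then show ?thesis using o by blast
      qed
    next
      case kR: False
      then have kr: "k \<in> ran T0" using kd by auto
      show ?thesis
      proof (cases "Suc k \<in> dom \<iota>0")
        case True
        then have sx: "Suc k \<noteq> x" using xr by auto
        have o: "k \<in> Des_pair (sundaram mus t)" unfolding e0 using kr True by auto
        have "k \<in> Des_pair (sundaram mus (Suc t))"
        proof (cases "x = k")
          case True2: True
          obtain v where v: "\<iota>0 (Suc k) = Some v" using True by auto
          have "?i (Suc k) = Some v" using iv[of "Suc k"] sx nt v by simp
          moreover have "?i k = Some (Suc t)" using ix True2 by simp
          moreover have "v \<le> t" using ile[OF v] .
          ultimately show ?thesis unfolding e1 using di True True2 by auto
        next
          case False
          then show ?thesis unfolding e1 using rT1 kr di True by auto
        qed
        then show ?thesis using o by blast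
      next
        case False
        then have sr: "Suc k \<in> ran T0" using kd by auto
        show ?thesis
        proof (cases "x = k")
          case True
          have "\<not> k \<in> Des_pair (sundaram mus (Suc t))" unfolding e1 using rT1 di True False nt by auto
          moreover have "\<not> k \<in> Des_pair (sundaram mus t)" unfolding e0 using C(7)[OF kr sr True] kR False by auto
          ultimately show ?thesis by blast
        next
          case xk: False
          show ?thesis
          proof (cases "x = Suc k")
            case True
            have "k \<in> Des_pair (sundaram mus (Suc t))" unfolding e1 using rT1 di True kr xk by auto
            moreover have "k \<in> Des_pair (sundaram mus t)" unfolding e0 using C(6)[OF kr sr True] kr sr by auto
            ultimately show ?thesis by blast
          next
            case xs: False
            have "k \<notin> dom ?i" "Suc k \<notin> dom ?i" using di xk xs kR False nt by auto
            then show ?thesis unfolding e1 e0 using rT1 kr sr xk xs C(5)[OF kr sr] kR False by auto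
          qed
        qed
      qed
    qed
  qed
qed

lemma base:
  assumes osc: "osc_tableau r mus" and mr: "Suc (Suc m) \<le> r"
  shows "Suc m \<in> Des_pair (sundaram mus (Suc (Suc m))) \<longleftrightarrow>
     (expansion mus (Suc m) \<and> contraction mus (Suc (Suc m)))
   \<or> (expansion mus (Suc m) \<and> expansion mus (Suc (Suc m)) \<and> fst (box mus (Suc m)) < fst (box mus (Suc (Suc m))))
   \<or> (contraction mus (Suc m) \<and> contraction mus (Suc (Suc m)) \<and> fst (box mus (Suc (Suc m))) < fst (box mus (Suc m)))"
proof -
  let ?k = "Suc m"
  let ?b1 = "box mus (Suc m)" and ?b2 = "box mus (Suc (Suc m))"
  obtain \<iota>0 T0 where s0: "sundaram mus m = (\<iota>0, T0)" by (cases "sundaram mus m")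
  have G0: "dom T0 = mus ! m" "young T0" "ran T0 \<inter> dom \<iota>0 = {}" "ran T0 \<union> dom \<iota>0 = {1..m}" "ran \<iota>0 \<subseteq> {1..m}"
    using G[OF osc _ s0] mr by auto
  obtain \<iota>1 T1 where s1: "sundaram mus (Suc m) = (\<iota>1, T1)" by (cases "sundaram mus (Suc m)")
  have G1: "dom T1 = mus ! Suc m" "young T1" "ran T1 \<inter> dom \<iota>1 = {}" "ran T1 \<union> dom \<iota>1 = {1..Suc m}"
    using G[OF osc _ s1] mr by auto
  obtain \<iota>2 T2 where s2: "sundaram mus (Suc (Suc m)) = (\<iota>2, T2)" by (cases "sundaram mus (Suc (Suc m))")
  have G2: "dom T2 = mus ! Suc (Suc m)" "young T2" "ran T2 \<inter> dom \<iota>2 = {}" "ran T2 \<union> dom \<iota>2 = {1..Suc (Suc m)}"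
    using G[OF osc mr s2] by auto
  have m1: "m < r" "Suc m < r" using mr by auto
  note bf1 = box_facts[OF osc m1(1)] and bf2 = box_facts[OF osc m1(2)]
  have f0: "ferrers (mus ! m)" "ferrers (mus ! Suc m)" "ferrers (mus ! Suc (Suc m))" using osc_ferrers[OF osc] mr by auto
  have kin: "?k \<in> ran T2 \<union> dom \<iota>2" "Suc ?k \<in> ran T2 \<union> dom \<iota>2" using G2(4) by auto
  have e2: "?k \<in> Des_pair (sundaram mus (Suc (Suc m))) \<longleftrightarrow>
       (?k \<in> dom \<iota>2 \<and> Suc ?k \<in> dom \<iota>2 \<and> the (\<iota>2 (Suc ?k)) < the (\<iota>2 ?k))
     \<or> (?k \<in> ran T2 \<and> Suc ?k \<in> ran T2 \<and> row_of T2 ?k < row_of T2 (Suc ?k))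
     \<or> (?k \<in> ran T2 \<and> Suc ?k \<in> dom \<iota>2)" unfolding s2 Des_pair_iff ..
  show ?thesis
  proof (cases "expansion mus ?k")
    case E1: True
    have b1: "?b1 \<notin> mus ! m" "mus ! Suc m = insert ?b1 (mus ! m)" "\<not> contraction mus ?k" using bf1 E1 by auto
    have t1: "\<iota>1 = \<iota>0" "T1 = T0(?b1 \<mapsto> ?k)" using sund_exp[OF s0 E1] s1 by auto
    have T1b: "T1 ?b1 = Some ?k" using t1 by simp
    show ?thesis
    proof (cases "expansion mus (Suc ?k)")
      case E2: True
      have b2: "?b2 \<notin> mus ! Suc m" "\<not> contraction mus (Suc ?k)" using bf2 E2 by auto
      have t2: "\<iota>2 = \<iota>0" "T2 = T1(?b2 \<mapsto> Suc ?k)" using sund_exp[OF s1 E2] s2 t1(1) by simp_all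
      have ne: "?b1 \<noteq> ?b2"
      proof
        assume "?b1 = ?b2" then have "?b2 \<in> mus ! Suc m" using b1(2) by simp
        then show False using b2(1) by simp
      qed
      have T2a: "T2 ?b1 = Some ?k" "T2 ?b2 = Some (Suc ?k)" using t2(2) T1b ne by simp_all
      have r1: "?k \<in> ran T2" using T2a(1) by (rule ranI)
      have r2: "Suc ?k \<in> ran T2" using T2a(2) by (rule ranI)
      have n1: "?k \<notin> dom \<iota>2" using r1 G2(3) by blast
      have n2: "Suc ?k \<notin> dom \<iota>2" using r2 G2(3) by blast
      obtain i1 j1 where bb1: "?b1 = (i1, j1)" by (cases ?b1)
      obtain i2 j2 where bb2: "?b2 = (i2, j2)" by (cases ?b2)
      have w1: "row_of T2 ?k = i1" using row_of_eq[OF G2(2), of i1 j1] T2a(1) bb1 by simp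
      have w2: "row_of T2 (Suc ?k) = i2" using row_of_eq[OF G2(2), of i2 j2] T2a(2) bb2 by simp
      have "?k \<in> Des_pair (sundaram mus (Suc (Suc m))) \<longleftrightarrow> i1 < i2" unfolding e2 w1 w2 using r1 r2 n1 n2 by simp
      then show ?thesis using E1 E2 b1(3) b2(2) bb1 bb2 by simp
    next
      case E2: False
      have b2: "?b2 \<in> mus ! Suc m" "mus ! Suc (Suc m) = mus ! Suc m - {?b2}" "contraction mus (Suc ?k)" using bf2 E2 by auto
      obtain T' x where cd: "col_delete T1 ?b2 = (T', x)" by (cases "col_delete T1 ?b2")
      have t2: "\<iota>2 = \<iota>0(x \<mapsto> Suc ?k, Suc ?k \<mapsto> x)" "T2 = T'" using sund_con[OF s1 E2 cd] s2 t1 by auto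
      have ff: "ferrers (dom T1)" "?b2 \<in> dom T1" "ferrers (dom T1 - {?b2})" using G1(1) f0 b2 by simp_all
      note C = col_delete_main[OF G1(2) ff cd]
      have "?k \<in> Des_pair (sundaram mus (Suc (Suc m)))"
      proof (cases "x = ?k")
        case True
        have "\<iota>2 ?k = Some (Suc ?k)" "\<iota>2 (Suc ?k) = Some ?k" using t2 True by auto
        then show ?thesis unfolding e2 by auto
      next
        case False
        have "?k \<in> ran T1" using T1b unfolding ran_def by blast
        then have "?k \<in> ran T2" using C(4) t2 False by auto
        moreover have "Suc ?k \<in> dom \<iota>2" using t2 by auto
        ultimately show ?thesis unfolding e2 by auto
      qed
      then show ?thesis using E1 b2(3) by auto
    qed
  next
    case E1: False
    have b1: "?b1 \<in> mus ! m" "mus ! Suc m = mus ! m - {?b1}" "contraction mus ?k" using bf1 E1 by auto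
    obtain Ta x1 where cd1: "col_delete T0 ?b1 = (Ta, x1)" by (cases "col_delete T0 ?b1")
    have t1: "\<iota>1 = \<iota>0(x1 \<mapsto> ?k, ?k \<mapsto> x1)" "T1 = Ta" using sund_con[OF s0 E1 cd1] s1 by auto
    show ?thesis
    proof (cases "expansion mus (Suc ?k)")
      case E2: True
      have b2: "\<not> contraction mus (Suc ?k)" using bf2 E2 by auto
      have t2: "\<iota>2 = \<iota>1" "T2 = T1(?b2 \<mapsto> Suc ?k)" using sund_exp[OF s1 E2] s2 by auto
      have "?k \<in> dom \<iota>2" using t2 t1 by auto
      then have "?k \<notin> ran T2" using G2(3) by blast
      moreover have "T2 ?b2 = Some (Suc ?k)" using t2 by simp
      then have "Suc ?k \<in> ran T2" by (rule ranI)
      moreover have "Suc ?k \<notin> dom \<iota>2" using G2(3) `Suc ?k \<in> ran T2` by blast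
      ultimately show ?thesis unfolding e2 using E1 b2 by auto
    next
      case E2: False
      have b2: "?b2 \<in> mus ! Suc m" "mus ! Suc (Suc m) = mus ! Suc m - {?b2}" "contraction mus (Suc ?k)" using bf2 E2 by auto
      obtain T' x2 where cd2: "col_delete T1 ?b2 = (T', x2)" by (cases "col_delete T1 ?b2")
      have t2: "\<iota>2 = \<iota>1(x2 \<mapsto> Suc ?k, Suc ?k \<mapsto> x2)" "T2 = T'" using sund_con[OF s1 E2 cd2] s2 by auto
      have ff1: "ferrers (dom T1)" "?b2 \<in> dom T1" "ferrers (dom T1 - {?b2})" using G1(1) f0 b2 by simp_all
      note C = col_delete_main[OF G1(2) ff1 cd2]
      have "?k \<in> dom \<iota>1" using t1 by auto
      then have x2k: "x2 \<noteq> ?k" using C(3) G1(3) by blast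
      have i2: "\<iota>2 ?k = Some x1" "\<iota>2 (Suc ?k) = Some x2" using t2 t1 x2k by auto
      have "?k \<notin> ran T2" "Suc ?k \<notin> ran T2" using i2 G2(3) by blast+
      then have d: "?k \<in> Des_pair (sundaram mus (Suc (Suc m))) \<longleftrightarrow> x2 < x1" unfolding e2 using i2 by auto
      obtain i1 j1 where bb1: "?b1 = (i1, j1)" by (cases ?b1)
      obtain i2 j2 where bb2: "?b2 = (i2, j2)" by (cases ?b2)
      have cc: "x2 < x1 \<longleftrightarrow> i2 < i1"
      proof -
        have h1: "ferrers (dom T0)" using G0(1) f0(1) by simp
        have h2: "(i1,j1) \<in> dom T0" using G0(1) b1(1) bb1 by simp
        have h3: "ferrers (dom T0 - {(i1,j1)})" using G0(1) f0(2) b1(2) bb1 by simp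
        have h4: "(i2,j2) \<in> dom T0 - {(i1,j1)}" using G0(1) b2(1) b1(2) bb1 bb2 by simp
        have h5: "ferrers (dom T0 - {(i1,j1)} - {(i2,j2)})" using G0(1) f0(3) b2(2) b1(2) bb1 bb2 by simp
        have h6: "col_delete T0 (i1,j1) = (Ta, x1)" using cd1 bb1 by simp
        have h7: "col_delete Ta (i2,j2) = (T', x2)" using cd2 bb2 t1(2) by simp
        show ?thesis by (rule CC[OF G0(2) h1 h2 h3 h4 h5 h6 h7])
      qed
      show ?thesis unfolding d cc using E1 E2 b1(3) b2(3) bb1 bb2 by auto
    qed
  qed
qed

theorem proposition6p3:
  assumes "osc_tableau r mus"
  shows "Des_osc r mus = Des_pair (sundaram mus r)"
proof (rule set_eqI)
  fix k
  note osc = assms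
  obtain \<iota> T where sr: "sundaram mus r = (\<iota>, T)" by (cases "sundaram mus r")
  have Gr: "ran T \<union> dom \<iota> = {1..r}" using G[OF osc _ sr] by auto
  show "k \<in> Des_osc r mus \<longleftrightarrow> k \<in> Des_pair (sundaram mus r)"
  proof (cases "1 \<le> k \<and> Suc k \<le> r")
    case True
    then obtain m where km: "k = Suc m" and mr: "Suc (Suc m) \<le> r" by (cases k) auto
    have it: "\<And>t. Suc k \<le> t \<Longrightarrow> t \<le> r \<longrightarrow> (k \<in> Des_pair (sundaram mus t) \<longleftrightarrow> k \<in> Des_pair (sundaram mus (Suc k)))"
    proof -
      fix t assume "Suc k \<le> t"
      then show "t \<le> r \<longrightarrow> (k \<in> Des_pair (sundaram mus t) \<longleftrightarrow> k \<in> Des_pair (sundaram mus (Suc k)))"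
      proof (induction t rule: dec_induct)
        case base then show ?case by simp
      next
        case (step n)
        show ?case
        proof
          assume "Suc n \<le> r"
          then have "k \<in> Des_pair (sundaram mus (Suc n)) \<longleftrightarrow> k \<in> Des_pair (sundaram mus n)"
            using pres[OF osc _ _ step(1)] True by simp
          then show "k \<in> Des_pair (sundaram mus (Suc n)) \<longleftrightarrow> k \<in> Des_pair (sundaram mus (Suc k))"
            using step(3) `Suc n \<le> r` by simp
        qed
      qed
    qed
    have "k \<in> Des_pair (sundaram mus r) \<longleftrightarrow> k \<in> Des_pair (sundaram mus (Suc k))" using it[of r] True by simp
    also have "\<dots> \<longleftrightarrow> k \<in> Des_osc r mus"
      unfolding km Des_osc_def using base[OF osc mr] mr by auto
    finally show ?thesis by simp
  next
    case False
    have "k \<notin> Des_osc r mus" unfolding Des_osc_def using False by auto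
    moreover have "k \<notin> Des_pair (sundaram mus r)"
    proof
      assume "k \<in> Des_pair (sundaram mus r)"
      then have "k \<in> ran T \<union> dom \<iota>" "Suc k \<in> ran T \<union> dom \<iota>" unfolding sr Des_pair_iff by auto
      then show False using Gr False by auto
    qed
    ultimately show ?thesis by simp
  qed
qed


end
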